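(* Let $z_1,\ldots,z_r,\zeta_1,\ldots,\zeta_{s+1}$ be orthonormal generators of $\mathrm{Cl}_{r,s+1}$ with $\langle z_i,z_i\rangle=1$, $\langle\zeta_j,\zeta_j\rangle=-1$, and let $a_1,\ldots,a_s,b_1,\ldots,b_{r+1}$ be orthonormal generators of $\mathrm{Cl}_{s,r+1}$ with $\langle a_i,a_i\rangle=1$, $\langle b_j,b_j\rangle=-1$. Let $\Phi\colon\mathrm{Cl}_{r,s+1}\to\mathrm{Cl}_{s,r+1}$ be the algebra isomorphism determined by $\Phi(z_i)=b_ib_{r+1}$ ($i=1,\ldots,r$), $\Phi(\zeta_j)=a_jb_{r+1}$ ($j=1,\ldots,s$), $\Phi(\zeta_{s+1})=b_{r+1}$. If $(V,\langle\cdot\,,\cdot\rangle_V)$ is an admissible module of $\mathrm{Cl}_{s,r+1}$ with representation $J\colon\mathrm{Cl}_{s,r+1}\to\mathrm{End}(V)$, then $V$ with the representation $J\circ\Phi\colon\mathrm{Cl}_{r,s+1}\to\mathrm{End}(V)$ and the same scalar product $\langle\cdot\,,\cdot\rangle_V$ is an admissible $\mathrm{Cl}_{r,s+1}$-module.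
   Context: A scalar product is a real symmetric non-degenerate bilinear form. $\mathbb R^{p,q}$ is $\mathbb R^{p+q}$ with quadratic form $x_1^2+\dots+x_p^2-x_{p+1}^2-\dots-x_{p+q}^2$ and $\mathrm{Cl}_{p,q}$ the Clifford algebra generated by $\mathbb R^{p,q}$ with relation $z^2=-\langle z,z\rangle\cdot1$ (so $z_i^2=-1$, $\zeta_j^2=1$, $a_i^2=-1$, $b_j^2=1$, and distinct orthonormal generators anticommute). A $\mathrm{Cl}_{p,q}$-module is a real vector space $V$ with a representation into $\mathrm{End}(V)$, and it is admissible if $V$ has a scalar product with $\langle J_zu,v\rangle_V=-\langle u,J_zv\rangle_V$ for all $z\in\mathbb R^{p,q}$, $u,v\in V$. *)

theory Defs
  imports "HOL-Analysis.Analysis"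
begin

definition scalar_product :: "('v::real_vector \<Rightarrow> 'v \<Rightarrow> real) \<Rightarrow> bool" where
  "scalar_product B \<longleftrightarrow>
     (\<forall>v. linear (\<lambda>u. B u v)) \<and> (\<forall>u. linear (\<lambda>v. B u v)) \<and>
     (\<forall>u v. B u v = B v u) \<and>
     (\<forall>u. (\<forall>v. B u v = 0) \<longrightarrow> u = 0)"

text \<open>A representation of Cl_{p,q} on V, given by the images J k of the orthonormal
  generators (indices k < p have square -1, indices p \<le> k < p+q have square +1,
  distinct generators anticommute).  By the universal property of the Clifford
  algebra these data are the same as an algebra homomorphism Cl_{p,q} \<rightarrow> End(V).\<close>
definition cl_module :: "nat \<Rightarrow> nat \<Rightarrow> (nat \<Rightarrow> 'v::real_vector \<Rightarrow> 'v) \<Rightarrow> bool" where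
  "cl_module p q J \<longleftrightarrow>
     (\<forall>k < p + q. linear (J k)) \<and>
     (\<forall>k < p. \<forall>v. J k (J k v) = - v) \<and>
     (\<forall>k. p \<le> k \<and> k < p + q \<longrightarrow> (\<forall>v. J k (J k v) = v)) \<and>
     (\<forall>i < p + q. \<forall>k < p + q. i \<noteq> k \<longrightarrow> (\<forall>v. J i (J k v) = - J k (J i v)))"

text \<open>Action of a vector z = (z_0,...,z_{p+q-1}) of R^{p,q} (coordinates w.r.t. the
  orthonormal generators).\<close>
definition cl_act :: "nat \<Rightarrow> (nat \<Rightarrow> 'v::real_vector \<Rightarrow> 'v) \<Rightarrow> (nat \<Rightarrow> real) \<Rightarrow> 'v \<Rightarrow> 'v" where
  "cl_act n J z v = (\<Sum>k<n. z k *\<^sub>R J k v)"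

definition admissible_module ::
  "nat \<Rightarrow> nat \<Rightarrow> (nat \<Rightarrow> 'v::real_vector \<Rightarrow> 'v) \<Rightarrow> ('v \<Rightarrow> 'v \<Rightarrow> real) \<Rightarrow> bool" where
  "admissible_module p q J B \<longleftrightarrow>
     cl_module p q J \<and> scalar_product B \<and>
     (\<forall>z u v. B (cl_act (p + q) J z u) v = - B u (cl_act (p + q) J z v))"

text \<open>J \<circ> \<Phi> on generators of Cl_{r,s+1}.  Indexing: in Cl_{r,s+1}, z_i = index i-1
  (i=1..r), \<zeta>_j = index r+j-1 (j=1..s+1).  In Cl_{s,r+1}, a_i = index i-1 (i=1..s),
  b_j = index s+j-1 (j=1..r+1).  \<Phi>(z_i)=b_i b_{r+1}, \<Phi>(\<zeta>_j)=a_j b_{r+1}, \<Phi>(\<zeta>_{s+1})=b_{r+1}.\<close>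
definition phi_pullback :: "nat \<Rightarrow> nat \<Rightarrow> (nat \<Rightarrow> 'v \<Rightarrow> 'v) \<Rightarrow> nat \<Rightarrow> 'v \<Rightarrow> 'v" where
  "phi_pullback r s J k =
     (if k < r then (\<lambda>v. J (s + k) (J (s + r) v))
      else if k < r + s then (\<lambda>v. J (k - r) (J (s + r) v))
      else J (s + r))"

end

theory Submission
  imports Defs
begin

lemma skew_gen:
  assumes "admissible_module p q J B" "k < p + q"
  shows "B (J k u) v = - B u (J k v)"
proof -
  define z where "z = (\<lambda>i. if i = k then 1 else (0::real))"
  have e: "\<And>w. cl_act (p + q) J z w = J k w"
  proof -
    fix w
    have "(\<lambda>i. z i *\<^sub>R J i w) = (\<lambda>i. if i = k then J k w else 0)"
      by (auto simp: z_def fun_eq_iff)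
    then show "cl_act (p + q) J z w = J k w"
      unfolding cl_act_def using assms(2) by (simp only: \<open>(\<lambda>i. z i *\<^sub>R J i w) = _\<close>) simp
  qed
  show ?thesis using assms(1) unfolding admissible_module_def
    by (metis e)
qed

lemma skew_from_gens:
  assumes sp: "scalar_product B" and g: "\<And>k u v. k < n \<Longrightarrow> B (K k u) v = - B u (K k v)"
  shows "B (cl_act n K z u) v = - B u (cl_act n K z v)"
proof -
  have l1: "linear (\<lambda>u. B u v)" and l2: "linear (\<lambda>v. B u v)"
    using sp unfolding scalar_product_def by auto
  have "B (cl_act n K z u) v = (\<Sum>k<n. B (z k *\<^sub>R K k u) v)"
    unfolding cl_act_def by (rule linear_sum[OF l1, unfolded o_def])
  also have "\<dots> = (\<Sum>k<n. z k * B (K k u) v)"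
    using linear_scale[OF l1] by simp
  also have "\<dots> = (\<Sum>k<n. - (z k * B u (K k v)))" using g by (intro sum.cong) auto
  also have "\<dots> = - (\<Sum>k<n. B u (z k *\<^sub>R K k v))"
    using linear_scale[OF l2] by (simp add: sum_negf)
  also have "\<dots> = - B u (cl_act n K z v)"
    unfolding cl_act_def by (subst linear_sum[OF l2, unfolded o_def]) (rule refl)
  finally show ?thesis .
qed

theorem theorem3p1:
  fixes r s :: nat and J :: "nat \<Rightarrow> 'v::real_vector \<Rightarrow> 'v" and B :: "'v \<Rightarrow> 'v \<Rightarrow> real"
  assumes "admissible_module s (r + 1) J B"
  shows "admissible_module r (s + 1) (phi_pullback r s J) B"
proof -
  note A = assms
  have cm: "cl_module s (r + 1) J" and sp: "scalar_product B"
    using A unfolding admissible_module_def by auto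
  have lin: "\<And>k. k < s + (r + 1) \<Longrightarrow> linear (J k)"
    and sqa: "\<And>k v. k < s \<Longrightarrow> J k (J k v) = - v"
    and sqb: "\<And>k v. s \<le> k \<Longrightarrow> k < s + (r + 1) \<Longrightarrow> J k (J k v) = v"
    and anti: "\<And>i k v. i < s + (r + 1) \<Longrightarrow> k < s + (r + 1) \<Longrightarrow> i \<noteq> k \<Longrightarrow> J i (J k v) = - J k (J i v)"
    using cm unfolding cl_module_def by blast+
  have neg: "\<And>k v. k < s + (r + 1) \<Longrightarrow> J k (- v) = - J k v"
    using lin linear_neg by blast
  have sk: "\<And>k u v. k < s + (r + 1) \<Longrightarrow> B (J k u) v = - B u (J k v)"
    using skew_gen[OF A] by blast
  define b where "b = s + r"
  have bb: "\<And>v. J b (J b v) = v" unfolding b_def by (rule sqb) auto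
  define X where "X k = (if k < r then s + k else k - r)" for k
  have Xr: "\<And>k. k < r + s \<Longrightarrow> X k < s + (r + 1) \<and> X k \<noteq> b"
    unfolding X_def b_def by auto
  have Kdef: "\<And>k. k < r + s \<Longrightarrow> phi_pullback r s J k = (\<lambda>v. J (X k) (J b v))"
    unfolding phi_pullback_def X_def b_def by auto
  have Kb: "\<And>k. \<not> k < r + s \<Longrightarrow> phi_pullback r s J k = J b"
    unfolding phi_pullback_def b_def by auto
  have blt: "b < s + (r + 1)" unfolding b_def by auto
  have sqX: "\<And>k v. k < r + s \<Longrightarrow> J (X k) (J b (J (X k) (J b v))) = - J (X k) (J (X k) v)"
  proof -
    fix k v assume k: "k < r + s"
    have "J b (J (X k) (J b v)) = - J (X k) (J b (J b v))"
      using anti[of b "X k"] Xr[OF k] blt by auto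
    then show "J (X k) (J b (J (X k) (J b v))) = - J (X k) (J (X k) v)"
      using bb neg Xr[OF k] by simp
  qed
  have cmK: "cl_module r (s + 1) (phi_pullback r s J)"
    unfolding cl_module_def
  proof (intro conjI allI impI)
    fix k assume k: "k < r + (s + 1)"
    show "linear (phi_pullback r s J k)"
    proof (cases "k < r + s")
      case True
      then show ?thesis using Kdef[OF True] lin Xr[OF True] blt
        by (simp add: linear_compose[unfolded o_def])
    next
      case False then show ?thesis using Kb lin blt by simp
    qed
  next
    fix k v assume k: "k < r"
    have "X k = s + k" unfolding X_def using k by simp
    then show "phi_pullback r s J k (phi_pullback r s J k v) = - v"
      using Kdef[of k] k sqX[of k v] sqb[of "s+k"] by simp
  next
    fix k v assume k: "r \<le> k \<and> k < r + (s + 1)"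
    show "phi_pullback r s J k (phi_pullback r s J k v) = v"
    proof (cases "k < r + s")
      case True
      have "X k = k - r" "k - r < s" unfolding X_def using k True by auto
      then show ?thesis using Kdef[OF True] sqX[OF True, of v] sqa[of "k - r"] by simp
    next
      case False then show ?thesis using Kb bb by simp
    qed
  next
    fix i k v assume i: "i < r + (s + 1)" and k: "k < r + (s + 1)" and ik: "i \<noteq> k"
    show "phi_pullback r s J i (phi_pullback r s J k v) = - phi_pullback r s J k (phi_pullback r s J i v)"
    proof (cases "i < r + s")
      case Ti: True
      show ?thesis
      proof (cases "k < r + s")
        case Tk: True
        have Xne: "X i \<noteq> X k" using ik Ti Tk unfolding X_def by (auto split: if_splits)
        have "J (X i) (J b (J (X k) (J b v))) = - J (X i) (J (X k) v)"
          using anti[of b "X k"] Xr[OF Tk] blt bb neg Xr[OF Ti] by simp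
        moreover have "J (X k) (J b (J (X i) (J b v))) = - J (X k) (J (X i) v)"
          using anti[of b "X i"] Xr[OF Ti] blt bb neg Xr[OF Tk] by simp
        moreover have "J (X i) (J (X k) v) = - J (X k) (J (X i) v)"
          using anti Xr[OF Ti] Xr[OF Tk] Xne by blast
        ultimately show ?thesis using Kdef[OF Ti] Kdef[OF Tk] by simp
      next
        case Fk: False
        have "J b (J (X i) (J b v)) = - J (X i) v"
          using anti[of b "X i"] Xr[OF Ti] blt bb by simp
        then show ?thesis using Kdef[OF Ti] Kb[OF Fk] bb by simp
      qed
    next
      case Fi: False
      then have Tk: "k < r + s" using i k ik by auto
      have "J b (J (X k) (J b v)) = - J (X k) v"
        using anti[of b "X k"] Xr[OF Tk] blt bb by simp
      then show ?thesis using Kdef[OF Tk] Kb[OF Fi] bb by simp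
    qed
  qed
  have skK: "\<And>k u v. k < r + (s + 1) \<Longrightarrow>
      B (phi_pullback r s J k u) v = - B u (phi_pullback r s J k v)"
  proof -
    fix k u v assume k: "k < r + (s + 1)"
    show "B (phi_pullback r s J k u) v = - B u (phi_pullback r s J k v)"
    proof (cases "k < r + s")
      case True
      have "B (J (X k) (J b u)) v = - B (J b u) (J (X k) v)" using Xr[OF True] by (intro sk) simp
      also have "\<dots> = B u (J b (J (X k) v))" using sk[OF blt, of u "J (X k) v"] by simp
      also have "\<dots> = - B u (J (X k) (J b v))"
      proof -
        have l2: "linear (\<lambda>w. B u w)"
          using sp[unfolded scalar_product_def, THEN conjunct2, THEN conjunct1] by (rule spec)
        have "J b (J (X k) v) = - J (X k) (J b v)"
          using anti[of b "X k"] Xr[OF True] blt by simp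
        then show ?thesis using linear_neg[OF l2] by simp
      qed
      finally show ?thesis using Kdef[OF True] by simp
    next
      case False then show ?thesis using Kb[OF False] sk[OF blt] by simp
    qed
  qed
  have sk3: "\<forall>z u v. B (cl_act (r + (s + 1)) (phi_pullback r s J) z u) v =
        - B u (cl_act (r + (s + 1)) (phi_pullback r s J) z v)"
    proof (intro allI)
    fix z u v
    show "B (cl_act (r + (s + 1)) (phi_pullback r s J) z u) v =
        - B u (cl_act (r + (s + 1)) (phi_pullback r s J) z v)"
      by (rule skew_from_gens[where K="phi_pullback r s J" and n="r + (s + 1)", OF sp skK])
  qed
  show ?thesis unfolding admissible_module_def
    using cmK sp sk3 by (simp only: simp_thms)
qed

end
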